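(* Let $\Omega>0$, let $0<\sigma\leq m_{\min}$, let $n\geq 2$ be an integer and set \[ \tau=\frac{e^{-1}}{\Omega}\Big(\frac{\sigma}{m_{\min}}\Big)^{\frac{1}{2n-1}}. \] Then there exist a positive discrete measure $\mu=\sum_{j=1}^{n}a_j \delta_{y_j}$ (all $a_j>0$) whose $n$ supports are the points $-(n-\tfrac12)\tau+2k\tau$, $k=0,1,\dots,n-1$ (i.e. $-(n-\frac{1}{2})\tau, -(n-\frac{5}{2})\tau, \dots, (n-\frac{3}{2})\tau$), and a positive discrete measure $\hat \mu=\sum_{j=1}^{n}\hat a_j \delta_{\hat y_j}$ (all $\hat a_j>0$) whose $n$ supports are the points $-(n-\tfrac32)\tau+2k\tau$, $k=0,1,\dots,n-1$ (i.e. $-(n-\frac{3}{2})\tau, -(n-\frac{7}{2})\tau,\dots, (n-\frac{1}{2})\tau$), such that \[ \max_{\omega\in[-\Omega,\Omega]}\big|\mathcal F[\hat \mu](\omega)- \mathcal F[\mu](\omega)\big|< \sigma, \qquad \min_{1\leq j\leq n}|a_j|= m_{\min}. \]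
   Context: For a discrete measure $\nu=\sum_{j} c_j\delta_{x_j}$ on $\mathbb R$, its Fourier transform is $\mathcal F[\nu](\omega)=\sum_j c_j e^{i x_j\omega}$, $\omega\in\mathbb R$. Here $\Omega>0$ is the cutoff frequency, $\sigma>0$ the noise level and $m_{\min}>0$ a prescribed minimal amplitude. *)

theory Defs
  imports "HOL-Analysis.Analysis"
begin

definition discrete_FT :: "nat \<Rightarrow> (nat \<Rightarrow> real) \<Rightarrow> (nat \<Rightarrow> real) \<Rightarrow> real \<Rightarrow> complex" where
  "discrete_FT n c x \<omega> = (\<Sum>j<n. complex_of_real (c j) * exp (\<i> * complex_of_real (x j * \<omega>)))"

end

theory Submission
  imports Defs
begin

lemma split2: "(\<Sum>i<2*(n::nat). f i) = (\<Sum>k<n. f (2*k)) + (\<Sum>k<n. (f (2*k+1) :: 'a::comm_monoid_add))"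
  by (induction n) (simp_all add: algebra_simps)

lemma binom_neg: "(\<Sum>j<Suc m. of_nat (m choose j) * (- z) ^ j) = (1 - (z::complex)) ^ m"
proof -
  have "(1 - z) ^ m = (-z + 1) ^ m" by simp
  also have "\<dots> = (\<Sum>j\<le>m. of_nat (m choose j) * (-z) ^ j * 1 ^ (m - j))"
    by (rule binomial_ring)
  finally show ?thesis by (simp add: lessThan_Suc_atMost)
qed

lemma exp_lin: "exp (\<i> * complex_of_real ((x0 + real j * t) * w)) =
   exp (\<i> * complex_of_real (x0 * w)) * exp (\<i> * complex_of_real (t * w)) ^ j"
proof -
  have "\<i> * complex_of_real ((x0 + real j * t) * w) = \<i> * complex_of_real (x0 * w) + of_nat j * (\<i> * complex_of_real (t * w))"
    by (simp add: algebra_simps)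
  then show ?thesis by (simp add: exp_add exp_of_nat_mult)
qed

lemma norm_one_minus: "cmod (1 - exp (\<i> * complex_of_real s)) \<le> \<bar>s\<bar>"
proof -
  have "cmod (1 - exp (\<i> * complex_of_real s)) = cmod (exp (\<i> * complex_of_real s) - 1)"
    by (simp add: norm_minus_commute)
  also have "\<dots> = 2 * \<bar>sin (s/2)\<bar>" by (rule dist_exp_i_1)
  also have "\<dots> \<le> 2 * \<bar>s/2\<bar>" using abs_sin_x_le_abs_x[of "s/2"] by linarith
  finally show ?thesis by simp
qed

theorem theorem2p4:
  fixes \<Omega> \<sigma> m_min :: real and n :: nat
  assumes "\<Omega> > 0" and "0 < \<sigma>" and "\<sigma> \<le> m_min" and "n \<ge> 2"
  defines "\<tau> \<equiv> exp (-1) / \<Omega> * (\<sigma> / m_min) powr (1 / (2 * real n - 1))"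
  shows "\<exists>a ahat :: nat \<Rightarrow> real.
           (\<forall>j<n. a j > 0) \<and> (\<forall>j<n. ahat j > 0) \<and>
           (SUP \<omega>\<in>{-\<Omega>..\<Omega>}.
              cmod (discrete_FT n ahat (\<lambda>k. -(real n - 3/2) * \<tau> + 2 * real k * \<tau>) \<omega>
                  - discrete_FT n a (\<lambda>k. -(real n - 1/2) * \<tau> + 2 * real k * \<tau>) \<omega>)) < \<sigma> \<and>
           (MIN j\<in>{..<n}. \<bar>a j\<bar>) = m_min"
proof -
  define m where "m = m_min"
  have mpos: "m > 0" using assms unfolding m_def by linarith
  define N where "N = 2 * n - 1"
  have N: "Suc N = 2 * n" "real N = 2 * real n - 1" using assms(4) unfolding N_def by auto
  define a where "a = (\<lambda>k. m * real (N choose (2*k)))"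
  define ahat where "ahat = (\<lambda>k. m * real (N choose (2*k+1)))"
  define x0 where "x0 = -(real n - 1/2) * \<tau>"
  have tpos: "\<tau> > 0" unfolding \<tau>_def using assms mpos m_def by auto
  have apos: "\<forall>j<n. a j > 0" unfolding a_def using mpos N_def by auto
  have ahpos: "\<forall>j<n. ahat j > 0" unfolding ahat_def using mpos N_def by auto
  have key: "cmod (discrete_FT n ahat (\<lambda>k. -(real n - 3/2) * \<tau> + 2 * real k * \<tau>) w
                  - discrete_FT n a (\<lambda>k. -(real n - 1/2) * \<tau> + 2 * real k * \<tau>) w) \<le> \<sigma> * exp (- real N)"
    if w: "w \<in> {-\<Omega>..\<Omega>}" for w
  proof -
    define E where "E = exp (\<i> * complex_of_real (x0 * w))"
    define z where "z = exp (\<i> * complex_of_real (\<tau> * w))"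
    define f where "f = (\<lambda>j. of_real m * of_nat (N choose j) * (-1)^j * E * z ^ j)"
    have A: "discrete_FT n a (\<lambda>k. -(real n - 1/2) * \<tau> + 2 * real k * \<tau>) w = (\<Sum>k<n. f (2*k))"
    proof -
      have pt: "(\<lambda>k. -(real n - 1/2) * \<tau> + 2 * real k * \<tau>) = (\<lambda>k. x0 + real (2*k) * \<tau>)"
        unfolding x0_def by (simp add: fun_eq_iff)
      show ?thesis unfolding pt discrete_FT_def exp_lin
        unfolding f_def a_def E_def z_def
        by (intro sum.cong refl) simp
    qed
    have B: "discrete_FT n ahat (\<lambda>k. -(real n - 3/2) * \<tau> + 2 * real k * \<tau>) w = - (\<Sum>k<n. f (2*k+1))"
    proof -
      have pt: "(\<lambda>k. -(real n - 3/2) * \<tau> + 2 * real k * \<tau>) = (\<lambda>k. x0 + real (2*k+1) * \<tau>)"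
        unfolding x0_def by (simp add: fun_eq_iff algebra_simps)
      show ?thesis unfolding pt discrete_FT_def exp_lin sum_negf[symmetric]
        unfolding f_def ahat_def E_def z_def
        by (intro sum.cong refl) simp
    qed
    have S: "(\<Sum>i<2*n. f i) = of_real m * E * (1 - z) ^ N"
    proof -
      have "(\<Sum>i<2*n. f i) = of_real m * E * (\<Sum>j<Suc N. of_nat (N choose j) * (- z) ^ j)"
        unfolding f_def N(1) sum_distrib_left
        by (intro sum.cong refl) (simp only: power_minus[of z] mult_ac)
      then show ?thesis by (simp only: binom_neg)
    qed
    have diff: "discrete_FT n ahat (\<lambda>k. -(real n - 3/2) * \<tau> + 2 * real k * \<tau>) w
                  - discrete_FT n a (\<lambda>k. -(real n - 1/2) * \<tau> + 2 * real k * \<tau>) w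
               = - (of_real m * E * (1 - z) ^ N)"
      using A B S split2[of f n] by (simp add: algebra_simps)
    have nE: "cmod E = 1" unfolding E_def by simp
    have nz: "cmod (1 - z) \<le> \<tau> * \<Omega>"
    proof -
      have "cmod (1 - z) \<le> \<bar>\<tau> * w\<bar>" unfolding z_def by (rule norm_one_minus)
      also have "\<dots> \<le> \<tau> * \<Omega>" using w tpos by (auto simp: abs_mult)
      finally show ?thesis .
    qed
    have "cmod (- (of_real m * E * (1 - z) ^ N)) = m * cmod (1 - z) ^ N"
      using mpos nE by (simp add: norm_mult norm_power)
    also have "\<dots> \<le> m * (\<tau> * \<Omega>) ^ N"
      using mpos nz by (intro mult_left_mono power_mono) auto
    also have "(\<tau> * \<Omega>) ^ N = exp (- real N) * (\<sigma> / m)"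
    proof -
      have "\<tau> * \<Omega> = exp (-1) * (\<sigma> / m) powr (1 / real N)"
        unfolding \<tau>_def N(2) m_def using assms(1) by simp
      then have "(\<tau> * \<Omega>) ^ N = exp (-1) ^ N * ((\<sigma> / m) powr (1 / real N)) ^ N"
        by (simp add: power_mult_distrib)
      also have "((\<sigma> / m) powr (1 / real N)) ^ N = \<sigma> / m"
        using N_def assms(2,4) mpos
        by (simp add: powr_realpow[symmetric] powr_powr)
      also have "exp (-1) ^ N = exp (- real N)"
        by (simp add: exp_of_nat_mult[symmetric])
      finally show ?thesis .
    qed
    finally have "cmod (- (of_real m * E * (1 - z) ^ N)) \<le> m * (exp (- real N) * (\<sigma> / m))" .
    also have "m * (exp (- real N) * (\<sigma> / m)) = \<sigma> * exp (- real N)" using mpos by simp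
    finally show ?thesis unfolding diff .
  qed
  have sup: "(SUP \<omega>\<in>{-\<Omega>..\<Omega>}.
              cmod (discrete_FT n ahat (\<lambda>k. -(real n - 3/2) * \<tau> + 2 * real k * \<tau>) \<omega>
                  - discrete_FT n a (\<lambda>k. -(real n - 1/2) * \<tau> + 2 * real k * \<tau>) \<omega>)) < \<sigma>"
  proof -
    have "(SUP \<omega>\<in>{-\<Omega>..\<Omega>}.
              cmod (discrete_FT n ahat (\<lambda>k. -(real n - 3/2) * \<tau> + 2 * real k * \<tau>) \<omega>
                  - discrete_FT n a (\<lambda>k. -(real n - 1/2) * \<tau> + 2 * real k * \<tau>) \<omega>)) \<le> \<sigma> * exp (- real N)"
      using assms(1) key by (intro cSUP_least) auto
    also have "\<sigma> * exp (- real N) < \<sigma>"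
      using assms(2,4) N_def by (simp add: mult_less_cancel_left1)
    finally show ?thesis .
  qed
  have min: "(MIN j\<in>{..<n}. \<bar>a j\<bar>) = m_min"
  proof (rule antisym)
    show "(MIN j\<in>{..<n}. \<bar>a j\<bar>) \<le> m_min"
    proof -
      have "0 \<in> {..<n}" using assms(4) by simp
      then have "(MIN j\<in>{..<n}. \<bar>a j\<bar>) \<le> \<bar>a 0\<bar>" by simp
      also have "\<bar>a 0\<bar> = m_min" unfolding a_def m_def using mpos m_def by simp
      finally show ?thesis .
    qed
    show "m_min \<le> (MIN j\<in>{..<n}. \<bar>a j\<bar>)"
    proof -
      have ne: "{..<n} \<noteq> {}" using assms(4) lessThan_empty_iff by (metis not_numeral_le_zero)
      have "\<forall>j\<in>{..<n}. m_min \<le> \<bar>a j\<bar>"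
      proof
        fix j assume "j \<in> {..<n}"
        then have "N choose (2*j) \<ge> 1" unfolding N_def by (simp add: Suc_leI)
        then show "m_min \<le> \<bar>a j\<bar>" unfolding a_def m_def using mpos m_def by simp
      qed
      then show ?thesis using ne by (simp add: Min_ge_iff)
    qed
  qed
  show ?thesis using apos ahpos sup min by blast
qed

end
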